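(* Let $k$, $t$ and $q$ be integers such that $q \ge 0$, $0 \le t < k$, $t \equiv k \pmod 2$, let $s \in [0,t+1]$ be the unique integer with $s \equiv q + \frac{k-t-2}{2} \pmod{t+2}$, and assume $\frac{1}{2(t+2)}k^2 + \frac{q-s}{t+2}k - \frac{t}{2} + s>k$. Let \[n = \frac{1}{2(t+2)}k^2 + \frac{q-s}{t+2}k - \frac{t}{2} + s - 1.\] Then a function $f :[n] \rightarrow \{-1,1\}$ satisfies $|f([n])| = q$ and $|f(B)| > t$ for all $k$-blocks $B \subseteq [n]$ if and only if $f \in \mathcal{F}_{k,t,q}$.
   Context: $[n]=\{1,\dots,n\}$; for $Y\subseteq[n]$, $f(Y)=\sum_{y\in Y}f(y)$; a $k$-block is a set of $k$ consecutive integers. The family $\mathcal{F}_{k,t,q}$ is defined as follows (with $k,t,q,s,n$ as in the claim). Write $n=km+r$ with integers $m\ge 0$, $0\le r\le k-1$. A function $f:[n]\to\{-1,1\}$ belongs to $\mathcal{F}_{k,t,q}$ if and only if, for one choice of sign $\epsilon\in\{1,-1\}$, $\epsilon f(x)=-1$ for $x\in R\setminus S$ and $\epsilon f(x)=1$ otherwise, where $R,S\subseteq[n]$ are as follows: if $r=0$, $R=S=\emptyset$; if $r\neq 0$, $R=\bigcup_{i=1}^{m+1}R_i$ with $R_i=\{(i-1)k+1,(i-1)k+2,\dots,(i-1)k+r\}$, and $S=\emptyset$ if $s=0$, while if $s\neq 0$, $S=\bigcup_{i=1}^{m+1}S_i$ where $S_i=\{a^i_1,\dots,a^i_s\}\subseteq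 R_i$ with $a^i_1<a^i_2<\dots<a^i_s$ and $a^{i+1}_\ell\le a^i_\ell+k$ for all $i\in[m]$ and $\ell\in[s]$. *)

theory Defs
  imports Complex_Main "HOL-Number_Theory.Cong"
begin

definition fsum :: "(nat \<Rightarrow> int) \<Rightarrow> nat set \<Rightarrow> int" where
  "fsum f Y = (\<Sum>y\<in>Y. f y)"

definition kblocks :: "nat \<Rightarrow> nat \<Rightarrow> nat set set" where
  "kblocks k n = {{a..a + k - 1} | a. 1 \<le> a \<and> a + k - 1 \<le> n}"

definition Rblk :: "nat \<Rightarrow> nat \<Rightarrow> nat \<Rightarrow> nat set" where
  "Rblk k r i = {(i - 1) * k + 1 .. (i - 1) * k + r}"

definition admissible_a :: "nat \<Rightarrow> nat \<Rightarrow> nat \<Rightarrow> nat \<Rightarrow> (nat \<Rightarrow> nat \<Rightarrow> nat) \<Rightarrow> bool" where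
  "admissible_a k r m s a \<longleftrightarrow>
     (\<forall>i\<in>{1..m+1}. strict_mono_on {1..s} (a i) \<and> (\<forall>l\<in>{1..s}. a i l \<in> Rblk k r i)) \<and>
     (\<forall>i\<in>{1..m}. \<forall>l\<in>{1..s}. a (i + 1) l \<le> a i l + k)"

text \<open>Membership of f in the family F_{k,t,q}; the family depends on t and q only through s.
  Here n = k m + r with m = n div k, r = n mod k.\<close>
definition inF :: "nat \<Rightarrow> nat \<Rightarrow> nat \<Rightarrow> (nat \<Rightarrow> int) \<Rightarrow> bool" where
  "inF k s n f \<longleftrightarrow>
     (let m = n div k; r = n mod k in
      \<exists>R S. (if r = 0 then R = {} \<and> S = {}
              else R = (\<Union>i\<in>{1..m+1}. Rblk k r i) \<and>
                   (if s = 0 then S = {}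
                    else (\<exists>a. admissible_a k r m s a \<and>
                              S = {a i l | i l. i \<in> {1..m+1} \<and> l \<in> {1..s}}))) \<and>
            (\<exists>\<epsilon>\<in>{1::int, -1}. \<forall>x\<in>{1..n}. \<epsilon> * f x = (if x \<in> R - S then -1 else 1)))"

end

theory Submission
  imports Defs
begin

lemma Rblk_char:
  assumes "i \<ge> 1" "r \<le> K"
  shows "x \<in> Rblk K r i \<longleftrightarrow> x \<ge> 1 \<and> (x-1) div K = i-1 \<and> (x-1) mod K < r"
proof
  assume x: "x \<in> Rblk K r i"
  then have x1: "(i-1)*K + 1 \<le> x" "x \<le> (i-1)*K + r" by (auto simp: Rblk_def)
  then have r1: "r \<ge> 1" by linarith
  define j where "j = x - 1 - (i-1)*K"
  have j: "x - 1 = (i-1)*K + j" "j < r" using x1 r1 unfolding j_def by linarith+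
  have jK: "j < K" using j assms by linarith
  have "(x-1) div K = i-1" using j jK by simp
  moreover have "(x-1) mod K = j" using j jK by simp
  ultimately show "x \<ge> 1 \<and> (x-1) div K = i-1 \<and> (x-1) mod K < r" using x1 j by simp
next
  assume h: "x \<ge> 1 \<and> (x-1) div K = i-1 \<and> (x-1) mod K < r"
  have d: "(x-1) div K = i-1" using h by simp
  have "x - 1 = (i-1)*K + (x-1) mod K" by (metis d div_mult_mod_eq)
  then show "x \<in> Rblk K r i" using h by (auto simp: Rblk_def)
qed

lemma sl_basic:
  fixes A :: "nat set"
  assumes "finite A"
  shows "set (sorted_list_of_set A) = A" "length (sorted_list_of_set A) = card A"
    "sorted_wrt (<) (sorted_list_of_set A)" "distinct (sorted_list_of_set A)"
  using assms by (auto simp: strict_sorted_list_of_set)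

lemma sl_count_less:
  fixes A :: "nat set"
  assumes fin: "finite A" and j: "j < card A"
  defines "xs \<equiv> sorted_list_of_set A"
  shows "card {z\<in>A. z < xs!j} = j"
proof -
  note b = sl_basic[OF fin, folded xs_def]
  have "{z\<in>A. z < xs!j} = (!) xs ` {0..<j}"
  proof (rule set_eqI, rule iffI)
    fix z assume z: "z \<in> {z\<in>A. z < xs!j}"
    then obtain i where i: "i < length xs" "z = xs!i" using b(1) by (metis (no_types, lifting) in_set_conv_nth mem_Collect_eq)
    have "i < j"
    proof (rule ccontr)
      assume "\<not> i < j"
      then have "i = j \<or> j < i" by auto
      then have "xs!j \<le> xs!i" using sorted_wrt_nth_less[OF b(3), of j i] i by auto
      then show False using z i by auto
    qed
    then show "z \<in> (!) xs ` {0..<j}" using i by auto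
  next
    fix z assume "z \<in> (!) xs ` {0..<j}"
    then obtain i where i: "i < j" "z = xs!i" by auto
    have "xs!i < xs!j" using sorted_wrt_nth_less[OF b(3) i(1)] j b(2) by auto
    moreover have "xs!i \<in> A" using b(1) b(2) i j by (metis less_trans nth_mem)
    ultimately show "z \<in> {z\<in>A. z < xs!j}" using i by auto
  qed
  moreover have "inj_on ((!) xs) {0..<j}"
    using b(4) b(2) j by (auto simp: inj_on_def nth_eq_iff_index_eq)
  ultimately show ?thesis by (simp add: card_image)
qed

lemma sl_count_greater:
  fixes A :: "nat set"
  assumes fin: "finite A" and j: "j < card A"
  defines "xs \<equiv> sorted_list_of_set A"
  shows "card {z\<in>A. xs!j < z} = card A - 1 - j"
proof -
  note b = sl_basic[OF fin, folded xs_def]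
  have "{z\<in>A. xs!j < z} = (!) xs ` {j+1..<card A}"
  proof (rule set_eqI, rule iffI)
    fix z assume z: "z \<in> {z\<in>A. xs!j < z}"
    then obtain i where i: "i < length xs" "z = xs!i" using b(1) by (metis (no_types, lifting) in_set_conv_nth mem_Collect_eq)
    have "j < i"
    proof (rule ccontr)
      assume "\<not> j < i"
      then have "i = j \<or> i < j" by auto
      then have "xs!i \<le> xs!j" using sorted_wrt_nth_less[OF b(3), of i j] j b(2) by auto
      then show False using z i by auto
    qed
    then show "z \<in> (!) xs ` {j+1..<card A}" using i b(2) by auto
  next
    fix z assume "z \<in> (!) xs ` {j+1..<card A}"
    then obtain i where i: "j < i" "i < card A" "z = xs!i" by (auto simp: Suc_le_eq)
    have "xs!j < xs!i" using sorted_wrt_nth_less[OF b(3) i(1)] i b(2) by auto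
    moreover have "xs!i \<in> A" using b(1) b(2) i by (metis nth_mem)
    ultimately show "z \<in> {z\<in>A. xs!j < z}" using i by auto
  qed
  moreover have "inj_on ((!) xs) {j+1..<card A}"
    using b(4) b(2) by (auto simp: inj_on_def nth_eq_iff_index_eq)
  ultimately show ?thesis by (simp add: card_image)
qed


lemma fsum_sign:
  assumes fin: "finite B" and vals: "\<forall>x\<in>B. f x \<in> {-1,1}" and e: "e \<in> {1::int,-1}"
  shows "e * fsum f B = int (card B) - 2 * int (card {x\<in>B. e * f x = -1})"
proof -
  let ?N = "{x\<in>B. e * f x = -1}"
  have ev: "\<forall>x\<in>B. e * f x \<in> {-1,1}" using vals e by auto
  have "e * fsum f B = (\<Sum>x\<in>B. e * f x)" by (simp add: fsum_def sum_distrib_left)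
  also have "\<dots> = (\<Sum>x\<in>?N. e * f x) + (\<Sum>x\<in>B - ?N. e * f x)"
    using fin by (metis (no_types, lifting) mem_Collect_eq subsetI sum.subset_diff add.commute)
  also have "(\<Sum>x\<in>?N. e * f x) = (\<Sum>x\<in>?N. -1)" by simp
  also have "(\<Sum>x\<in>B - ?N. e * f x) = (\<Sum>x\<in>B - ?N. 1)"
    using ev by (intro sum.cong) auto
  finally have "e * fsum f B = - int (card ?N) + int (card (B - ?N))" by simp
  moreover have "card (B - ?N) = card B - card ?N" using fin by (intro card_Diff_subset) auto
  moreover have "card ?N \<le> card B" using fin by (intro card_mono) auto
  ultimately show ?thesis by simp
qed

lemma card_Rblk: "card (Rblk K r i) = r"
  by (simp add: Rblk_def)

locale L =
  fixes K P m r S0 n :: nat and f :: "nat \<Rightarrow> int"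
  assumes P1: "P \<ge> 1" and rdef: "r = S0 + P - 1" and rK: "r < K"
    and ndef: "n = K*m + r" and m1: "m \<ge> 1" and KP: "2*P \<le> K"
    and fvals: "\<forall>x\<in>{1..n}. f x \<in> {-1,1}"
begin

definition R where "R = (\<Union>i\<in>{1..m+1}. Rblk K r i)"
definition Neg where "Neg e = {x\<in>{1..n}. e * f x = -1}"
definition win where "win a = {a..<a+K}"
definition okw where "okw a \<longleftrightarrow> 1 \<le> a \<and> a + K \<le> n + 1"

lemma K1: "K \<ge> 1" using rK by simp
lemma nK: "K \<le> n" using m1 ndef by (metis le_add1 le_trans mult.commute mult_le_mono2 mult_1_right)

lemma R_char: "x \<in> R \<longleftrightarrow> x \<in> {1..n} \<and> (x-1) mod K < r"
proof
  assume "x \<in> R"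
  then obtain i where i: "i \<in> {1..m+1}" "x \<in> Rblk K r i" by (auto simp: R_def)
  then have x: "(i-1)*K + 1 \<le> x" "x \<le> (i-1)*K + r" by (auto simp: Rblk_def)
  have "(i-1)*K \<le> m*K" using i(1) by auto
  moreover have "n = m*K + r" using ndef by (simp add: mult.commute)
  ultimately have "x \<le> n" using x by linarith
  then show "x \<in> {1..n} \<and> (x-1) mod K < r" using Rblk_char[of i r K x] i rK by auto
next
  assume h: "x \<in> {1..n} \<and> (x-1) mod K < r"
  define i where "i = (x-1) div K + 1"
  have "x - 1 < K*(m+1)" using h ndef rK by auto
  then have "(x-1) div K < m+1" by (simp add: less_mult_imp_div_less mult.commute)
  then have "i \<in> {1..m+1}" by (simp add: i_def)
  moreover have "x \<in> Rblk K r i" using Rblk_char[of i r K x] h rK by (simp add: i_def)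
  ultimately show "x \<in> R" by (auto simp: R_def)
qed

lemma R_sub: "R \<subseteq> {1..n}" using R_char by auto
lemma finR: "finite R" using R_sub finite_subset by blast

lemma Rblk_sub: "i \<in> {1..m+1} \<Longrightarrow> Rblk K r i \<subseteq> R" by (auto simp: R_def)

lemma win_sub: "okw a \<Longrightarrow> win a \<subseteq> {1..n}" by (auto simp: okw_def win_def)

lemma bij_restrict:
  assumes "bij_betw g A B"
  shows "bij_betw g {x\<in>A. Q (g x)} {y\<in>B. Q y}"
  using assms unfolding bij_betw_def inj_on_def by auto

lemma win_bij: "bij_betw (\<lambda>x. (x-1) mod K) (win a) {0..<K}" if "a \<ge> 1"
proof -
  have inj: "inj_on (\<lambda>x. (x-1) mod K) (win a)"
  proof (rule inj_onI)
    fix x y assume x: "x \<in> win a" and y: "y \<in> win a" and e: "(x-1) mod K = (y-1) mod K"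
    show "x = y"
    proof (rule ccontr)
      assume ne: "x \<noteq> y"
      { fix u v assume u: "u \<in> win a" and v: "v \<in> win a" and uv: "u < v"
          and e2: "(u-1) mod K = (v-1) mod K"
        have "K dvd (v-1) - (u-1)" using e2 mod_eq_dvd_iff_nat[of "u-1" "v-1" K] uv by auto
        moreover have "0 < (v-1) - (u-1)" "(v-1) - (u-1) < K" using u v uv that by (auto simp: win_def)
        ultimately have False using dvd_imp_le by fastforce }
      then show False using x y e ne by (metis linorder_neqE_nat)
    qed
  qed
  moreover have "(\<lambda>x. (x-1) mod K) ` win a \<subseteq> {0..<K}" using K1 by auto
  moreover have "card (win a) = card {0..<K}" by (simp add: win_def)
  ultimately show ?thesis
    by (metis bij_betw_def card_image card_subset_eq finite_atLeastLessThan)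
qed

lemma card_win_R: assumes "okw a" shows "card (win a \<inter> R) = r"
proof -
  have a1: "a \<ge> 1" using assms by (simp add: okw_def)
  have "win a \<inter> R = {x\<in>win a. (x-1) mod K < r}" using win_sub[OF assms] R_char by auto
  moreover have "bij_betw (\<lambda>x. (x-1) mod K) {x\<in>win a. (x-1) mod K < r} {y\<in>{0..<K}. y < r}"
    using bij_restrict[OF win_bij[OF a1]] .
  moreover have "{y\<in>{0..<K}. y < r} = {0..<r}" using rK by auto
  ultimately show ?thesis by (simp add: bij_betw_same_card)
qed


lemma multiwin:
  assumes H: "\<forall>b. okw b \<longrightarrow> card (win b \<inter> N) \<le> P-1" and a: "a \<ge> 1"
  shows "a + j*K \<le> n+1 \<Longrightarrow> card ({a..<a+j*K} \<inter> N) \<le> j*(P-1)"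
proof (induction j)
  case 0 then show ?case by simp
next
  case (Suc j)
  have u: "{a..<a+Suc j*K} \<inter> N = ({a..<a+j*K} \<inter> N) \<union> (win (a+j*K) \<inter> N)"
    by (auto simp: win_def)
  have "okw (a+j*K)" using Suc.prems a by (simp add: okw_def add.assoc)
  then have w: "card (win (a+j*K) \<inter> N) \<le> P-1" using H by blast
  have "card ({a..<a+Suc j*K} \<inter> N) \<le> card ({a..<a+j*K} \<inter> N) + card (win (a+j*K) \<inter> N)"
    unfolding u by (rule card_Un_le)
  also have "\<dots> \<le> j*(P-1) + (P-1)" using Suc w by simp
  finally show ?case by simp
qed

lemma tailwin: "okw (n+1-K)" using nK K1 by (auto simp: okw_def)

lemma Rblk_win: assumes "i \<in> {1..m+1}" shows "\<exists>b. okw b \<and> Rblk K r i \<subseteq> win b"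
proof (cases "i \<le> m")
  case True
  have "i*K \<le> m*K" using True by simp
  moreover have "n = m*K + r" using ndef by (simp add: mult.commute)
  moreover have "(i-1)*K + K = i*K" using assms by (metis One_nat_def Suc_pred le_numeral_extra(2) atLeastAtMost_iff less_le_trans mult_Suc add.commute zero_less_one linorder_not_le)
  ultimately have "okw ((i-1)*K+1)" unfolding okw_def by linarith
  moreover have "Rblk K r i \<subseteq> win ((i-1)*K+1)" using rK by (auto simp: Rblk_def win_def)
  ultimately show ?thesis by blast
next
  case False
  then have "i = m+1" using assms by auto
  then have "Rblk K r i \<subseteq> win (n+1-K)" using rK nK ndef by (auto simp: Rblk_def win_def mult.commute)
  then show ?thesis using tailwin by blast
qed

lemma Rblk_bound:
  assumes H: "\<forall>b. okw b \<longrightarrow> card (win b \<inter> N) \<le> P-1" and i: "i \<in> {1..m+1}"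
  shows "card (Rblk K r i \<inter> N) \<le> P-1"
proof -
  obtain b where b: "okw b" "Rblk K r i \<subseteq> win b" using Rblk_win[OF i] by blast
  have "card (Rblk K r i \<inter> N) \<le> card (win b \<inter> N)"
    using b(2) by (intro card_mono) (auto simp: win_def)
  then show ?thesis using H b(1) by fastforce
qed

lemma total_bound:
  assumes H: "\<forall>b. okw b \<longrightarrow> card (win b \<inter> N) \<le> P-1" and N: "N \<subseteq> {1..n}"
  shows "card N \<le> (m+1)*(P-1)"
proof -
  have e: "N = ({1..<1+m*K} \<inter> N) \<union> (win (n+1-K) \<inter> N)"
    using N nK ndef rK by (auto simp: win_def mult.commute)
  have "card N \<le> card ({1..<1+m*K} \<inter> N) + card (win (n+1-K) \<inter> N)"
    by (subst e) (rule card_Un_le)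
  also have "\<dots> \<le> m*(P-1) + (P-1)"
    using multiwin[OF H, of 1 m] H tailwin ndef by (intro add_mono) (auto simp: mult.commute)
  finally show ?thesis by simp
qed


lemma Rblk_exact:
  assumes H: "\<forall>b. okw b \<longrightarrow> card (win b \<inter> N) \<le> P-1" and N: "N \<subseteq> {1..n}"
    and c: "card N = (m+1)*(P-1)" and i: "i \<in> {1..m+1}"
  shows "card (Rblk K r i \<inter> N) = P-1"
proof -
  define A where "A = {1..<1+(i-1)*K}"
  define C where "C = {(i-1)*K+r+1..<(i-1)*K+r+1+(m+1-i)*K}"
  have ar: "(i-1)*K + (m+1-i)*K = m*K" using i by (simp add: add_mult_distrib[symmetric])
  have e: "N \<subseteq> (A \<inter> N) \<union> (Rblk K r i \<inter> N) \<union> (C \<inter> N)"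
  proof
    fix x assume x: "x \<in> N"
    then have x1: "1 \<le> x" "x \<le> n" using N by auto
    show "x \<in> (A \<inter> N) \<union> (Rblk K r i \<inter> N) \<union> (C \<inter> N)"
      using x x1 ar ndef by (auto simp: A_def C_def Rblk_def mult.commute)
  qed
  have "card N \<le> card ((A \<inter> N) \<union> (Rblk K r i \<inter> N) \<union> (C \<inter> N))"
    by (rule card_mono[OF _ e]) (auto simp: A_def C_def Rblk_def)
  also have "\<dots> \<le> card (A \<inter> N) + card (Rblk K r i \<inter> N) + card (C \<inter> N)"
    by (meson card_Un_le add_mono le_refl order_trans)
  also have "card (A \<inter> N) \<le> (i-1)*(P-1)"
  proof -
    have "1 + (i-1)*K \<le> n+1" using ar ndef by (simp add: mult.commute)
    then show ?thesis unfolding A_def using multiwin[OF H, of 1 "i-1"] by simp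
  qed
  also have "card (C \<inter> N) \<le> (m+1-i)*(P-1)"
  proof -
    have "(i-1)*K+r+1 + (m+1-i)*K \<le> n+1" using ar ndef by (simp add: mult.commute)
    then show ?thesis unfolding C_def using multiwin[OF H, of "(i-1)*K+r+1" "m+1-i"] by simp
  qed
  finally have "(m+1)*(P-1) \<le> (i-1)*(P-1) + card (Rblk K r i \<inter> N) + (m+1-i)*(P-1)"
    using c by simp
  moreover have "(i-1)*(P-1) + (m+1-i)*(P-1) = m*(P-1)" using i by (simp add: add_mult_distrib[symmetric])
  ultimately have "P-1 \<le> card (Rblk K r i \<inter> N)" by simp
  then show ?thesis using Rblk_bound[OF H i] by simp
qed

lemma N_sub_R:
  assumes H: "\<forall>b. okw b \<longrightarrow> card (win b \<inter> N) \<le> P-1" and N: "N \<subseteq> {1..n}"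
    and c: "card N = (m+1)*(P-1)"
  shows "N \<subseteq> R"
proof
  fix x assume x: "x \<in> N"
  show "x \<in> R"
  proof (rule ccontr)
    assume nx: "x \<notin> R"
    have x1: "1 \<le> x" "x \<le> n" using x N by auto
    then have xm: "(x-1) mod K \<ge> r" using nx R_char by auto
    define i where "i = (x-1) div K + 1"
    have xe: "x - 1 = (i-1)*K + (x-1) mod K" by (simp add: i_def)
    have im: "i \<le> m"
    proof (rule ccontr)
      assume "\<not> i \<le> m"
      then have "m \<le> i-1" by simp
      then have "m*K \<le> (i-1)*K" by simp
      then have "m*K + r \<le> x - 1" using xe xm by linarith
      then show False using x1 ndef by (simp add: mult.commute)
    qed
    have i1: "i \<in> {1..m+1}" using im by (simp add: i_def)
    have ok: "okw ((i-1)*K+1)"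
    proof -
      have "(i-1)*K + K = i*K" using i1 by (metis Suc_diff_1 atLeastAtMost_iff less_le_trans mult_Suc add.commute zero_less_one linorder_not_le)
      moreover have "i*K \<le> m*K" using im by simp
      moreover have "n = m*K + r" using ndef by (simp add: mult.commute)
      ultimately show ?thesis unfolding okw_def by linarith
    qed
    have sub: "insert x (Rblk K r i \<inter> N) \<subseteq> win ((i-1)*K+1) \<inter> N"
    proof -
      have "Rblk K r i \<subseteq> win ((i-1)*K+1)" using rK by (auto simp: Rblk_def win_def)
      moreover have "x \<in> win ((i-1)*K+1)"
      proof -
        have mk: "(x-1) mod K < K" using K1 by simp
        show ?thesis unfolding win_def atLeastLessThan_iff using xe x1 mk by linarith
      qed
      ultimately show ?thesis using x by auto
    qed
    have xn: "x \<notin> Rblk K r i" using Rblk_char[of i r K x] i1 rK xm by simp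
    have "card (insert x (Rblk K r i \<inter> N)) = P"
    proof -
      have fin: "finite (Rblk K r i \<inter> N)" by (simp add: Rblk_def)
      have "x \<notin> Rblk K r i \<inter> N" using xn by simp
      then show ?thesis using card_insert_disjoint[OF fin] Rblk_exact[OF H N c i1] P1 by simp
    qed
    moreover have "card (insert x (Rblk K r i \<inter> N)) \<le> card (win ((i-1)*K+1) \<inter> N)"
      by (rule card_mono[OF _ sub]) (simp add: win_def)
    ultimately show False using H ok P1 by fastforce
  qed
qed


context
  fixes N assumes H: "\<forall>b. okw b \<longrightarrow> card (win b \<inter> N) \<le> P-1"
    and NS: "N \<subseteq> {1..n}" and Nc: "card N = (m+1)*(P-1)"
begin

definition Pos where "Pos i = Rblk K r i - N"
definition aa where "aa i l = sorted_list_of_set (Pos i) ! (l-1)"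

lemma finPos: "finite (Pos i)" by (simp add: Pos_def Rblk_def)

lemma cardPos: assumes "i \<in> {1..m+1}" shows "card (Pos i) = S0"
proof -
  have "card (Pos i) = card (Rblk K r i) - card (Rblk K r i \<inter> N)"
    unfolding Pos_def by (rule card_Diff_subset_Int) (simp add: Rblk_def)
  then show ?thesis using Rblk_exact[OF H NS Nc assms] card_Rblk[of K r i] rdef P1 by simp
qed

lemma aa_mem: assumes "i \<in> {1..m+1}" "l \<in> {1..S0}" shows "aa i l \<in> Pos i"
proof -
  have "l - 1 < length (sorted_list_of_set (Pos i))"
    using assms cardPos[OF assms(1)] sl_basic(2)[OF finPos] by auto
  then show ?thesis unfolding aa_def using sl_basic(1)[OF finPos] by (metis nth_mem)
qed

lemma Pos_sub: "Pos i \<subseteq> Rblk K r i" by (auto simp: Pos_def)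

lemma aa_adj:
  assumes i: "i \<in> {1..m}" and l: "l \<in> {1..S0}"
  shows "aa (i+1) l \<le> aa i l + K"
proof (rule ccontr)
  assume "\<not> aa (i+1) l \<le> aa i l + K"
  then have zy: "aa i l + K < aa (i+1) l" by simp
  define y where "y = aa i l"
  define z where "z = aa (i+1) l"
  define j where "j = l - 1"
  have i1: "i \<in> {1..m+1}" and i2: "i+1 \<in> {1..m+1}" using i by auto
  have yP: "y \<in> Pos i" using aa_mem[OF i1 l] by (simp add: y_def)
  have zP: "z \<in> Pos (i+1)" using aa_mem[OF i2 l] by (simp add: z_def)
  have yR: "y \<in> Rblk K r i" using yP Pos_sub by blast
  have zR: "z \<in> R" using zP Pos_sub Rblk_sub[OF i2] by blast
  have zn: "z \<le> n" using zR R_sub by auto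
  have ydiv: "(y-1) div K = i-1" "y \<ge> 1" using yR Rblk_char[of i r K y] i1 rK by auto
  have ok: "okw (y+1)" using zy zn unfolding okw_def y_def z_def by linarith
  have jS: "j < card (Pos i)" "j < card (Pos (i+1))" using l cardPos[OF i1] cardPos[OF i2] by (auto simp: j_def)
  have c1: "card {u\<in>Pos i. y < u} = S0 - 1 - j"
    using sl_count_greater[OF finPos jS(1)] cardPos[OF i1] by (simp add: y_def aa_def j_def)
  have c2: "card {u\<in>Pos (i+1). u < z} = j"
    using sl_count_less[OF finPos jS(2)] by (simp add: z_def aa_def j_def)
  have sub: "win (y+1) \<inter> R \<subseteq> (win (y+1) \<inter> N) \<union> ({u\<in>Pos i. y < u} \<union> {u\<in>Pos (i+1). u < z})"
  proof
    fix u assume u: "u \<in> win (y+1) \<inter> R"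
    show "u \<in> (win (y+1) \<inter> N) \<union> ({u\<in>Pos i. y < u} \<union> {u\<in>Pos (i+1). u < z})"
    proof (cases "u \<in> N")
      case True then show ?thesis using u by auto
    next
      case False
      from u obtain j' where j': "j' \<in> {1..m+1}" "u \<in> Rblk K r j'" by (auto simp: R_def)
      have ud: "(u-1) div K = j'-1" "u \<ge> 1" using Rblk_char[of j' r K u] j' rK by auto
      have uw: "y+1 \<le> u" "u < y+1+K" using u by (auto simp: win_def)
      have A: "(y-1) div K \<le> (u-1) div K" using uw by (intro div_le_mono) simp
      have B0: "(u-1) div K \<le> ((y-1) + K) div K" using uw ydiv by (intro div_le_mono) simp
      have B1: "((y-1) + K) div K = (y-1) div K + 1" using K1 by simp
      have B: "j' - 1 \<le> i - 1 + 1" using B0 B1 ud(1) ydiv(1) by simp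
      have A': "i - 1 \<le> j' - 1" using A ud(1) ydiv(1) by simp
      have "j' = i \<or> j' = i+1" using A' B j' i by auto
      then show ?thesis
      proof
        assume "j' = i"
        then show ?thesis using j' False uw by (auto simp: Pos_def)
      next
        assume "j' = i+1"
        then show ?thesis using j' False uw zy by (auto simp: Pos_def y_def z_def)
      qed
    qed
  qed
  have "r \<le> card ((win (y+1) \<inter> N) \<union> ({u\<in>Pos i. y < u} \<union> {u\<in>Pos (i+1). u < z}))"
    using card_mono[OF _ sub] card_win_R[OF ok] finPos by (simp add: win_def)
  also have "\<dots> \<le> card (win (y+1) \<inter> N) + (card {u\<in>Pos i. y < u} + card {u\<in>Pos (i+1). u < z})"
    by (meson card_Un_le add_mono le_refl order_trans)
  finally have "r \<le> card (win (y+1) \<inter> N) + (S0 - 1 - j + j)" using c1 c2 by simp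
  moreover have "j < S0" using l by (auto simp: j_def)
  moreover have "card (win (y+1) \<inter> N) \<le> P - 1" using H ok by blast
  ultimately show False using rdef P1 by linarith
qed


lemma fwd_struct:
  "\<exists>S. (if r = 0 then R = {} \<and> S = {}
         else R = (\<Union>i\<in>{1..m+1}. Rblk K r i) \<and>
              (if S0 = 0 then S = {}
               else (\<exists>a. admissible_a K r m S0 a \<and>
                         S = {a i l | i l. i \<in> {1..m+1} \<and> l \<in> {1..S0}}))) \<and> R - S = N"
proof (rule exI[of _ "R - N"], intro conjI)
  have NR: "N \<subseteq> R" using N_sub_R[OF H NS Nc] .
  show "R - (R - N) = N" using NR by auto
  have RN: "R - N = (\<Union>i\<in>{1..m+1}. Pos i)" by (auto simp: R_def Pos_def)
  show "if r = 0 then R = {} \<and> R - N = {}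
         else R = (\<Union>i\<in>{1..m+1}. Rblk K r i) \<and>
              (if S0 = 0 then R - N = {}
               else (\<exists>a. admissible_a K r m S0 a \<and>
                         R - N = {a i l | i l. i \<in> {1..m+1} \<and> l \<in> {1..S0}}))"
  proof (cases "r = 0")
    case True
    then have "R = {}" using R_char by auto
    then show ?thesis using True by simp
  next
    case r0: False
    show ?thesis
    proof (cases "S0 = 0")
      case True
      have "\<forall>i\<in>{1..m+1}. Pos i = {}" using cardPos True finPos by (metis card_0_eq)
      then show ?thesis using r0 True RN by (simp add: R_def)
    next
      case S0: False
      have adm: "admissible_a K r m S0 aa"
        unfolding admissible_a_def
      proof (intro conjI ballI)
        fix i assume i: "i \<in> {1..m+1}"
        show "strict_mono_on {1..S0} (aa i)"
        proof (rule strict_mono_onI)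
          fix l1 l2 assume l: "l1 \<in> {1..S0}" "l2 \<in> {1..S0}" "l1 < l2"
          have "l2 - 1 < length (sorted_list_of_set (Pos i))"
            using l cardPos[OF i] sl_basic(2)[OF finPos] by auto
          moreover have "l1 - 1 < l2 - 1" using l by auto
          ultimately show "aa i l1 < aa i l2"
            unfolding aa_def using sorted_wrt_nth_less[OF sl_basic(3)[OF finPos]] by blast
        qed
      next
        fix i l assume "i \<in> {1..m+1}" "l \<in> {1..S0}"
        then show "aa i l \<in> Rblk K r i" using aa_mem Pos_sub by blast
      next
        fix i l assume "i \<in> {1..m}" "l \<in> {1..S0}"
        then show "aa (i+1) l \<le> aa i l + K" by (rule aa_adj)
      qed
      have seq: "R - N = {aa i l | i l. i \<in> {1..m+1} \<and> l \<in> {1..S0}}"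
      proof (rule set_eqI, rule iffI)
        fix u assume "u \<in> R - N"
        then obtain i where i: "i \<in> {1..m+1}" "u \<in> Pos i" using RN by auto
        then obtain idx where idx: "idx < length (sorted_list_of_set (Pos i))"
          "u = sorted_list_of_set (Pos i) ! idx"
          using sl_basic(1)[OF finPos] by (metis in_set_conv_nth)
        have "idx + 1 \<in> {1..S0}" using idx cardPos[OF i(1)] sl_basic(2)[OF finPos] by auto
        moreover have "u = aa i (idx+1)" using idx by (simp add: aa_def)
        ultimately show "u \<in> {aa i l | i l. i \<in> {1..m+1} \<and> l \<in> {1..S0}}" using i by blast
      next
        fix u assume "u \<in> {aa i l | i l. i \<in> {1..m+1} \<and> l \<in> {1..S0}}"
        then obtain i l where "i \<in> {1..m+1}" "l \<in> {1..S0}" "u = aa i l" by blast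
        then show "u \<in> R - N" using aa_mem RN by blast
      qed
      show ?thesis using r0 S0 adm seq by (simp add: R_def) blast
    qed
  qed
qed

end


lemma Rblk_disj: "i \<ge> 1 \<Longrightarrow> j \<ge> 1 \<Longrightarrow> i \<noteq> j \<Longrightarrow> Rblk K r i \<inter> Rblk K r j = {}"
  using Rblk_char[of i r K] Rblk_char[of j r K] rK by auto

context
  fixes a S assumes adm: "admissible_a K r m S0 a"
    and Sdef: "S = {a i l | i l. i \<in> {1..m+1} \<and> l \<in> {1..S0}}"
begin

lemma a_in: "i \<in> {1..m+1} \<Longrightarrow> l \<in> {1..S0} \<Longrightarrow> a i l \<in> Rblk K r i"
  using adm by (auto simp: admissible_a_def)
lemma a_inj: "i \<in> {1..m+1} \<Longrightarrow> inj_on (a i) {1..S0}"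
  using adm by (auto simp: admissible_a_def intro: strict_mono_on_imp_inj_on)
lemma a_adj: "i \<in> {1..m} \<Longrightarrow> l \<in> {1..S0} \<Longrightarrow> a (i+1) l \<le> a i l + K"
  using adm by (auto simp: admissible_a_def)

lemma S_sub: "S \<subseteq> R" using a_in Rblk_sub Sdef by blast

lemma card_RS: "card (R - S) = (m+1)*(P-1)"
proof -
  define A where "A i = a i ` {1..S0}" for i
  have RS: "R - S = (\<Union>i\<in>{1..m+1}. Rblk K r i - A i)"
  proof (rule set_eqI, rule iffI)
    fix x assume "x \<in> R - S"
    then show "x \<in> (\<Union>i\<in>{1..m+1}. Rblk K r i - A i)"
      unfolding R_def A_def Sdef by blast
  next
    fix x assume "x \<in> (\<Union>i\<in>{1..m+1}. Rblk K r i - A i)"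
    then obtain i where i: "i \<in> {1..m+1}" "x \<in> Rblk K r i" "x \<notin> A i" by blast
    have "x \<notin> S"
    proof
      assume "x \<in> S"
      then obtain j l where jl: "j \<in> {1..m+1}" "l \<in> {1..S0}" "x = a j l" using Sdef by blast
      then have "x \<in> Rblk K r j" using a_in by blast
      moreover have "j \<noteq> i" using jl i(3) by (auto simp: A_def)
      ultimately show False using Rblk_disj[of i j] i jl by auto
    qed
    then show "x \<in> R - S" using i Rblk_sub by blast
  qed
  have "card (R - S) = (\<Sum>i\<in>{1..m+1}. card (Rblk K r i - A i))"
  proof -
    have disj: "\<forall>i\<in>{1..m+1}. \<forall>j\<in>{1..m+1}. i \<noteq> j \<longrightarrow> (Rblk K r i - A i) \<inter> (Rblk K r j - A j) = {}"
      using Rblk_disj by fastforce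
    show ?thesis unfolding RS by (rule card_UN_disjoint[OF _ _ disj]) (auto simp: Rblk_def)
  qed
  also have "\<dots> = (\<Sum>i\<in>{1..m+1}. P - 1)"
  proof (rule sum.cong[OF refl])
    fix i assume i: "i \<in> {1..m+1}"
    have "A i \<subseteq> Rblk K r i" using a_in[OF i] by (auto simp: A_def)
    moreover have "card (A i) = S0" unfolding A_def using card_image[OF a_inj[OF i]] by simp
    ultimately show "card (Rblk K r i - A i) = P - 1"
      using card_Diff_subset[of "A i" "Rblk K r i"] card_Rblk[of K r i] rdef P1
      by (simp add: A_def)
  qed
  finally show ?thesis by simp
qed

lemma win_S: assumes ok: "okw b" shows "S0 \<le> card (win b \<inter> S)"
proof -
  define i where "i = (b-1) div K + 1"
  have b1: "b \<ge> 1" "b + K \<le> n + 1" using ok by (auto simp: okw_def)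
  have be: "b - 1 = (i-1)*K + (b-1) mod K" by (simp add: i_def)
  have bm: "(b-1) mod K < K" using K1 by simp
  have iK: "i*K = (i-1)*K + K" by (simp add: i_def)
  have im: "i \<le> m"
  proof (rule ccontr)
    assume "\<not> i \<le> m"
    then have "m \<le> i - 1" by simp
    then have "m*K \<le> (i-1)*K" by simp
    moreover have "n = m*K + r" using ndef by (simp add: mult.commute)
    ultimately show False using be b1 rK by linarith
  qed
  have i1: "i \<in> {1..m+1}" "i+1 \<in> {1..m+1}" "i \<in> {1..m}" using im by (auto simp: i_def)
  define g where "g l = (if b \<le> a i l then a i l else a (i+1) l)" for l
  have bnd: "\<And>l. l \<in> {1..S0} \<Longrightarrow> (i-1)*K + 1 \<le> a i l \<and> a i l \<le> (i-1)*K + r \<and>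
        i*K + 1 \<le> a (i+1) l \<and> a (i+1) l \<le> i*K + r"
  proof -
    fix l assume l: "l \<in> {1..S0}"
    show "(i-1)*K + 1 \<le> a i l \<and> a i l \<le> (i-1)*K + r \<and> i*K + 1 \<le> a (i+1) l \<and> a (i+1) l \<le> i*K + r"
      using a_in[OF i1(1) l] a_in[OF i1(2) l] by (simp add: Rblk_def)
  qed
  have gin: "g ` {1..S0} \<subseteq> win b \<inter> S"
  proof
    fix x assume "x \<in> g ` {1..S0}"
    then obtain l where l: "l \<in> {1..S0}" "x = g l" by blast
    note B = bnd[OF l(1)]
    note ad = a_adj[OF i1(3) l(1)]
    have "x \<in> win b"
    proof (cases "b \<le> a i l")
      case True
      then show ?thesis using l B be rK iK unfolding g_def win_def by auto
    next
      case False
      then show ?thesis using l B be bm ad iK unfolding g_def win_def by auto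
    qed
    moreover have "x \<in> S"
    proof (cases "b \<le> a i l")
      case True then have "x = a i l" using l by (simp add: g_def)
      then show ?thesis using l i1(1) unfolding Sdef by blast
    next
      case False then have "x = a (i+1) l" using l by (simp add: g_def)
      then show ?thesis using l i1(2) unfolding Sdef by blast
    qed
    ultimately show "x \<in> win b \<inter> S" by blast
  qed
  have ginj: "inj_on g {1..S0}"
  proof (rule inj_onI)
    fix l1 l2 assume l: "l1 \<in> {1..S0}" "l2 \<in> {1..S0}" and e: "g l1 = g l2"
    note B1 = bnd[OF l(1)] and B2 = bnd[OF l(2)]
    show "l1 = l2"
    proof (cases "b \<le> a i l1"; cases "b \<le> a i l2")
      assume "b \<le> a i l1" "b \<le> a i l2"
      then show ?thesis using e l inj_onD[OF a_inj[OF i1(1)]] unfolding g_def by auto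
    next
      assume "\<not> b \<le> a i l1" "\<not> b \<le> a i l2"
      then show ?thesis using e l inj_onD[OF a_inj[OF i1(2)]] unfolding g_def by auto
    next
      assume "b \<le> a i l1" "\<not> b \<le> a i l2"
      then show ?thesis using e B1 B2 rK iK unfolding g_def by auto
    next
      assume "\<not> b \<le> a i l1" "b \<le> a i l2"
      then show ?thesis using e B1 B2 rK iK unfolding g_def by auto
    qed
  qed
  have "card {1..S0} \<le> card (win b \<inter> S)"
    by (rule card_inj_on_le[OF ginj gin]) (simp add: win_def)
  then show ?thesis by simp
qed

lemma win_RS: assumes ok: "okw b" shows "card (win b \<inter> (R - S)) \<le> P - 1"
proof -
  have e: "win b \<inter> R = (win b \<inter> (R - S)) \<union> (win b \<inter> S)" using S_sub by auto
  have "card (win b \<inter> R) = card (win b \<inter> (R - S)) + card (win b \<inter> S)"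
    unfolding e by (rule card_Un_disjoint) (auto simp: win_def)
  then show ?thesis using card_win_R[OF ok] win_S[OF ok] rdef by linarith
qed

end


lemma fsum_Neg: assumes "B \<subseteq> {1..n}" "e \<in> {1,-1}"
  shows "e * fsum f B = int (card B) - 2 * int (card (B \<inter> Neg e))"
proof -
  have fin: "finite B" using assms(1) finite_subset by blast
  have eq: "B \<inter> Neg e = {x\<in>B. e * f x = -1}" using assms(1) by (auto simp: Neg_def)
  have "\<forall>x\<in>B. f x \<in> {-1,1}" using assms(1) fvals by blast
  then show ?thesis unfolding eq using fsum_sign[OF fin _ assms(2)] by blast
qed

lemma Neg_flip: assumes "okw b"
  shows "card (win b \<inter> Neg (-1)) = K - card (win b \<inter> Neg 1)"
proof -
  have "win b \<inter> Neg (-1) = win b - (win b \<inter> Neg 1)"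
    using win_sub[OF assms] fvals by (auto simp: Neg_def)
  then show ?thesis by (simp add: card_Diff_subset win_def)
qed

lemma win_step: "card (win (c+1) \<inter> N) \<le> card (win c \<inter> N) + 1"
    "card (win c \<inter> N) \<le> card (win (c+1) \<inter> N) + 1"
proof -
  have "win (c+1) \<inter> N \<subseteq> insert (c+K) (win c \<inter> N)" by (auto simp: win_def)
  then have "card (win (c+1) \<inter> N) \<le> card (insert (c+K) (win c \<inter> N))"
    by (rule card_mono[rotated]) (simp add: win_def)
  also have "\<dots> \<le> card (win c \<inter> N) + 1" using card_insert_le_m1
    by (metis Suc_eq_plus1 card_insert_if finite_Int finite_atLeastLessThan le_refl win_def le_SucI)
  finally show "card (win (c+1) \<inter> N) \<le> card (win c \<inter> N) + 1" .
  have "win c \<inter> N \<subseteq> insert c (win (c+1) \<inter> N)" by (auto simp: win_def)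
  then have "card (win c \<inter> N) \<le> card (insert c (win (c+1) \<inter> N))"
    by (rule card_mono[rotated]) (simp add: win_def)
  also have "\<dots> \<le> card (win (c+1) \<inter> N) + 1"
    by (metis Suc_eq_plus1 card_insert_if finite_Int finite_atLeastLessThan le_refl win_def le_SucI)
  finally show "card (win c \<inter> N) \<le> card (win (c+1) \<inter> N) + 1" .
qed

lemma okw1: "okw 1" using nK by (simp add: okw_def)

lemma sign_consistent:
  assumes D: "\<forall>b. okw b \<longrightarrow> card (win b \<inter> Neg 1) \<le> P-1 \<or> K+1-P \<le> card (win b \<inter> Neg 1)"
  shows "\<exists>e\<in>{1,-1}. \<forall>b. okw b \<longrightarrow> card (win b \<inter> Neg e) \<le> P-1"
proof -
  define low where "low b \<longleftrightarrow> card (win b \<inter> Neg 1) \<le> P-1" for b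
  have step: "okw (b+2) \<Longrightarrow> low (b+2) = low (b+1)" for b
  proof -
    assume ok2: "okw (b+2)"
    have ok1: "okw (b+1)" using ok2 by (simp add: okw_def)
    have s1: "card (win (b+2) \<inter> Neg 1) \<le> card (win (b+1) \<inter> Neg 1) + 1"
      "card (win (b+1) \<inter> Neg 1) \<le> card (win (b+2) \<inter> Neg 1) + 1"
      using win_step[of "b+1" "Neg 1"] by (simp_all add: add.assoc)
    show ?thesis using D ok1 ok2 s1 KP P1 unfolding low_def by fastforce
  qed
  have all: "okw (b+1) \<Longrightarrow> low (b+1) = low 1" for b
  proof (induction b)
    case 0 then show ?case by simp
  next
    case (Suc b)
    have "okw (b+1)" using Suc.prems by (simp add: okw_def)
    then show ?case using Suc step[of b] by simp
  qed
  have all': "okw b \<Longrightarrow> low b = low 1" for b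
    using all[of "b-1"] by (cases b) (auto simp: okw_def)
  show ?thesis
  proof (cases "low 1")
    case True
    then show ?thesis using all' unfolding low_def by force
  next
    case False
    have "\<forall>b. okw b \<longrightarrow> card (win b \<inter> Neg (-1)) \<le> P-1"
    proof (intro allI impI)
      fix b assume ok: "okw b"
      then have "\<not> low b" using all' False by simp
      then have "K+1-P \<le> card (win b \<inter> Neg 1)" using D ok unfolding low_def by auto
      then show "card (win b \<inter> Neg (-1)) \<le> P-1" using Neg_flip[OF ok] by simp
    qed
    then show ?thesis by force
  qed
qed

end


theorem theorem2p7:
  fixes k t q s :: int and n :: nat and f :: "nat \<Rightarrow> int"
  assumes q: "q \<ge> 0"
    and t: "0 \<le> t" "t < k"
    and par: "[t = k] (mod 2)"
    and s: "0 \<le> s" "s \<le> t + 1" "[s = q + (k - t - 2) div 2] (mod (t + 2))"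
    and big: "real_of_int k ^ 2 / (2 * (t + 2)) + (q - s) * k / (t + 2) - t / 2 + s > k"
    and n: "real n = real_of_int k ^ 2 / (2 * (t + 2)) + (q - s) * k / (t + 2) - t / 2 + s - 1"
    and f: "\<forall>x\<in>{1..n}. f x \<in> {-1, 1}"
  shows "(\<bar>fsum f {1..n}\<bar> = q \<and> (\<forall>B\<in>kblocks (nat k) n. \<bar>fsum f B\<bar> > t))
         \<longleftrightarrow> inF (nat k) (nat s) n f"
proof -
  define p where "p = (k - t) div 2"
  have "2 dvd (k - t)" using par by (simp add: cong_iff_dvd_diff)
  then have kp: "k = t + 2*p" unfolding p_def by auto
  have p1: "p \<ge> 1" using kp t by linarith
  have "(k - t - 2) div 2 = p - 1" using kp by simp
  then have "[s = q + (p - 1)] (mod (t + 2))" using s(3) by simp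
  then have "(t+2) dvd s - (q + (p-1))" by (simp add: cong_iff_dvd_diff)
  then have "(t+2) dvd (q + (p-1) - s)" by (metis dvd_minus_iff minus_diff_eq)
  then obtain M where M: "q + (p-1) - s = (t+2)*M" by (elim dvdE)
  have qM: "q = (t+2)*M + s - p + 1" using M by linarith
  have nreal: "real n = real_of_int (M*k + p + s - 1)"
  proof -
    have d: "real_of_int t + 2 > 0" using t by simp
    have d': "real_of_int t + 2 \<noteq> 0" using d by linarith
    have "(real_of_int (t+2*p))^2 / real_of_int (2*(t+2)) + real_of_int ((((t+2)*M + s - p + 1) - s) * (t+2*p)) / real_of_int (t+2) - real_of_int t/2 + real_of_int s - 1 = real_of_int (M*(t+2*p) + p + s - 1)"
      using d' by (simp add: divide_simps power2_eq_square) algebra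
    then have "real n = real_of_int (M*(t+2*p) + p + s - 1)"
      using n[unfolded qM kp] by simp
    then show ?thesis using kp by simp
  qed
  then have nint: "int n = M*k + p + s - 1" by linarith
  have bigi: "M*k + p + s > k" using big n nreal by linarith
  have M1: "M \<ge> 1"
  proof (rule ccontr)
    assume "\<not> M \<ge> 1"
    then have "M*k \<le> 0" using t by (simp add: mult_nonpos_nonneg)
    then show False using bigi s kp p1 by linarith
  qed
  define K where "K = nat k"
  define P where "P = nat p"
  define S0 where "S0 = nat s"
  define m where "m = nat M"
  define r where "r = S0 + P - 1"
  have ints: "int K = k" "int P = p" "int S0 = s" "int m = M" using t p1 s M1
    by (auto simp: K_def P_def S0_def m_def)
  have rint: "int r = s + p - 1" using ints p1 by (simp add: r_def)
  have nKm: "n = K*m + r"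
  proof -
    have "int n = int (K*m + r)" using nint ints rint by (simp add: mult.commute)
    then show ?thesis by linarith
  qed
  interpret L K P m r S0 n f
  proof
    show "1 \<le> P" using ints p1 by linarith
    show "r = S0 + P - 1" by (simp add: r_def)
    show "r < K" using ints rint kp s p1 by linarith
    show "n = K*m + r" by (rule nKm)
    show "1 \<le> m" using ints M1 by linarith
    show "2*P \<le> K" using ints kp t by linarith
    show "\<forall>x\<in>{1..n}. f x \<in> {-1,1}" using f by simp
  qed
  have rK: "r < K" using ints rint kp s p1 by linarith
  have divmod: "n div K = m" "n mod K = r" using nKm rK by (simp_all add: mult.commute)
  have qn: "q = int n - 2 * int ((m+1)*(P-1))"
  proof -
    have P1': "P \<ge> 1" using ints p1 by linarith
    have e0: "int ((m+1)*(P-1)) = (int m + 1)*(int P - 1)"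
      unfolding of_nat_mult of_nat_add of_nat_diff[OF P1'] by simp
    have e1: "int ((m+1)*(P-1)) = (M+1)*(p-1)" unfolding e0 using ints by simp
    have e2: "int n = M*(t+2*p) + p + s - 1" using nint kp by simp
    show ?thesis unfolding e1 e2 qM by (simp add: algebra_simps)
  qed
  have KPt: "int K = t + 2 * int P" using ints kp by simp
  have kb: "kblocks (nat k) n = {win b | b. okw b}"
  proof -
    have "{a..a + K - 1} = {a..<a+K}" for a using K1 by auto
    then show ?thesis unfolding kblocks_def K_def[symmetric] win_def okw_def
      using K1 by (auto; metis add_le_cancel_right le_diff_conv)
  qed
  have inF_iff: "inF (nat k) (nat s) n f \<longleftrightarrow>
     (\<exists>R' S. (if r = 0 then R' = {} \<and> S = {}
              else R' = (\<Union>i\<in>{1..m+1}. Rblk K r i) \<and>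
                   (if S0 = 0 then S = {}
                    else (\<exists>a. admissible_a K r m S0 a \<and>
                              S = {a i l | i l. i \<in> {1..m+1} \<and> l \<in> {1..S0}}))) \<and>
            (\<exists>\<epsilon>\<in>{1::int, -1}. \<forall>x\<in>{1..n}. \<epsilon> * f x = (if x \<in> R' - S then -1 else 1)))"
    unfolding inF_def Let_def divmod K_def[symmetric] S0_def[symmetric] divmod[unfolded K_def] ..
  show ?thesis
  proof
    assume A: "\<bar>fsum f {1..n}\<bar> = q \<and> (\<forall>B\<in>kblocks (nat k) n. \<bar>fsum f B\<bar> > t)"
    have D: "\<forall>b. okw b \<longrightarrow> card (win b \<inter> Neg 1) \<le> P-1 \<or> K+1-P \<le> card (win b \<inter> Neg 1)"
    proof (intro allI impI)
      fix b assume ok: "okw b"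
      have "win b \<in> kblocks (nat k) n" using kb ok by blast
      then have gt: "\<bar>fsum f (win b)\<bar> > t" using A by blast
      have "1 * fsum f (win b) = int (card (win b)) - 2 * int (card (win b \<inter> Neg 1))"
        by (rule fsum_Neg[OF win_sub[OF ok]]) simp
      then have "fsum f (win b) = int K - 2 * int (card (win b \<inter> Neg 1))" by (simp add: win_def)
      then show "card (win b \<inter> Neg 1) \<le> P-1 \<or> K+1-P \<le> card (win b \<inter> Neg 1)"
        using gt KPt by (cases "int K \<ge> 2 * int (card (win b \<inter> Neg 1))") (auto simp: abs_if split: if_splits)
    qed
    obtain e where e: "e \<in> {1,-1}" and H: "\<forall>b. okw b \<longrightarrow> card (win b \<inter> Neg e) \<le> P-1"
      using sign_consistent[OF D] by blast
    have NS: "Neg e \<subseteq> {1..n}" by (auto simp: Neg_def)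
    have tot: "e * fsum f {1..n} = int n - 2 * int (card (Neg e))"
      using fsum_Neg[of "{1..n}" e] e NS by (simp add: Int_absorb1)
    have le: "card (Neg e) \<le> (m+1)*(P-1)" by (rule total_bound[OF H NS])
    have "e * fsum f {1..n} \<ge> q" using tot le qn by linarith
    moreover have "\<bar>e * fsum f {1..n}\<bar> = q" using A e by (auto simp: abs_mult)
    ultimately have "e * fsum f {1..n} = q" using q by linarith
    then have Nc: "card (Neg e) = (m+1)*(P-1)" using tot qn by linarith
    obtain S where S: "(if r = 0 then R = {} \<and> S = {}
         else R = (\<Union>i\<in>{1..m+1}. Rblk K r i) \<and>
              (if S0 = 0 then S = {}
               else (\<exists>a. admissible_a K r m S0 a \<and>
                         S = {a i l | i l. i \<in> {1..m+1} \<and> l \<in> {1..S0}})))" and RS: "R - S = Neg e"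
      using fwd_struct[OF H NS Nc] by blast
    have "\<forall>x\<in>{1..n}. e * f x = (if x \<in> R - S then -1 else 1)"
    proof
      fix x assume x: "x \<in> {1..n}"
      show "e * f x = (if x \<in> R - S then -1 else 1)"
        using x f e unfolding RS Neg_def by auto
    qed
    then show "inF (nat k) (nat s) n f" unfolding inF_iff using S e by blast
  next
    assume "inF (nat k) (nat s) n f"
    then obtain R' S \<epsilon> where RS: "(if r = 0 then R' = {} \<and> S = {}
              else R' = (\<Union>i\<in>{1..m+1}. Rblk K r i) \<and>
                   (if S0 = 0 then S = {}
                    else (\<exists>a. admissible_a K r m S0 a \<and>
                              S = {a i l | i l. i \<in> {1..m+1} \<and> l \<in> {1..S0}})))"
      and eps: "\<epsilon> \<in> {1,-1}" and fe: "\<forall>x\<in>{1..n}. \<epsilon> * f x = (if x \<in> R' - S then -1 else 1)"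
      unfolding inF_iff by blast
    have RR: "R' = R"
    proof (cases "r = 0")
      case True then show ?thesis using RS R_char by auto
    next
      case False then show ?thesis using RS by (simp add: R_def)
    qed
    obtain a where adm: "admissible_a K r m S0 a" and Sa: "S = {a i l | i l. i \<in> {1..m+1} \<and> l \<in> {1..S0}}"
    proof (cases "S0 = 0")
      case True
      have "S = {}" using RS True by (auto split: if_splits)
      moreover have "admissible_a K r m S0 (\<lambda>_ _. 0)" using True by (simp add: admissible_a_def strict_mono_on_def)
      ultimately show ?thesis using that True by auto
    next
      case False
      then have "r \<noteq> 0" using P1 by (simp add: r_def)
      then show ?thesis using RS False that by auto
    qed
    have NE: "Neg \<epsilon> = R - S"
    proof (rule set_eqI)
      fix x
      show "x \<in> Neg \<epsilon> \<longleftrightarrow> x \<in> R - S"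
      proof (cases "x \<in> {1..n}")
        case True
        have "\<epsilon> * f x = (if x \<in> R - S then -1 else 1)" using fe True RR by blast
        then show ?thesis using True unfolding Neg_def by (cases "x \<in> R - S") auto
      next
        case False
        then show ?thesis using R_sub unfolding Neg_def by auto
      qed
    qed
    have RSsub: "{1..n} \<inter> (R - S) = R - S" using R_sub by auto
    have "\<epsilon> * fsum f {1..n} = int n - 2 * int (card (R - S))"
      using fsum_Neg[of "{1..n}" \<epsilon>] eps RSsub unfolding NE by simp
    then have tot: "\<epsilon> * fsum f {1..n} = q" using card_RS[OF adm Sa] qn by simp
    have "\<bar>fsum f {1..n}\<bar> = q" using tot eps q by auto
    moreover have "\<forall>B\<in>kblocks (nat k) n. \<bar>fsum f B\<bar> > t"
    proof
      fix B assume "B \<in> kblocks (nat k) n"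
      then obtain b where ok: "okw b" and B: "B = win b" using kb by blast
      have "\<epsilon> * fsum f B = int (card (win b)) - 2 * int (card (win b \<inter> Neg \<epsilon>))"
        unfolding B by (rule fsum_Neg[OF win_sub[OF ok] eps])
      moreover have "card (win b \<inter> Neg \<epsilon>) \<le> P - 1" unfolding NE by (rule win_RS[OF adm Sa ok])
      ultimately have "\<epsilon> * fsum f B \<ge> t + 2" using KPt P1 by (simp add: win_def of_nat_diff)
      then show "\<bar>fsum f B\<bar> > t" using eps t by auto
    qed
    ultimately show "\<bar>fsum f {1..n}\<bar> = q \<and> (\<forall>B\<in>kblocks (nat k) n. \<bar>fsum f B\<bar> > t)" by blast
  qed
qed

end
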